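(* Let $1\le l\le r$ and consider a canonical noiseless MMV model $B=AX$ in which $A$ satisfies $0\le\delta^L_{2k-r+l}(A)<1$ and the nonzero rows of $X$ are in general position. Let $I\subset\{1,\dots,n\}$ satisfy $|I|\le\min(2(k-r)+l-1,\,k-1)$, $|I\setminus\operatorname{supp}X|\le k-r+l-1$ and $|I\cap\operatorname{supp}X|\ge k-r$. Then for every $j\notin I$, the following are equivalent: (a) $j\in\operatorname{supp}X$; (b) $\operatorname{rank}[A_I~B]=\operatorname{rank}[A_{I\cup\{j\}}~B]$; (c) $\mathbf a_j^{*}P^\perp_{R([A_I~B])}\mathbf a_j=0$.
   Context: Canonical MMV setting: $m,n,r,k$ are positive integers with $r\le m<n$ and $r\le k$. $A\in\mathbb{R}^{m\times n}$ is the sensing matrix with columns $\mathbf a_1,\dots,\mathbf a_n$; $X\in\mathbb{R}^{n\times r}$ has rows $\mathbf x^1,\dots,\mathbf x^n$, $\operatorname{supp}X=\{i:\mathbf x^i\neq 0\}$ and $|\operatorname{supp}X|=k$; $B=AX\in\mathbb{R}^{m\times r}$ has full column rank $r$. For an index set $I$, $A_I$ is the submatrix of $A$ formed by the columns indexed by $I$, and $[A_I~B]$ denotes horizontal concatenation. $R(M)$ is the column space of $M$, $P_{R(M)}$ the orthogonal projection onto it, and $P^\perp_{R(M)}=\mathrm{Id}-P_{R(M)}$; $^*$ denotes transpose. The lower restricted isometry constant $\delta^L_s(A)$ is the smallest $\delta\ge0$ such that $(1-\delta)\|\mathbf x\|_2^2\le\|A\mathbf x\|_2^2$ for all $\mathbf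 x$ with at most $s$ nonzero entries. "The nonzero rows of $X$ are in general position" means any $r$ of the $k$ nonzero rows of $X$ are linearly independent. *)

theory Defs
  imports "HOL-Analysis.Analysis"
begin

definition row_supp :: "real^'r^'n \<Rightarrow> 'n set" where
  "row_supp X = {i. X $ i \<noteq> 0}"

definition lower_ric :: "nat \<Rightarrow> real^'n^'m \<Rightarrow> real" where
  "lower_ric s A = Inf {d. d \<ge> 0 \<and> (\<forall>x::real^'n. card {i. x $ i \<noteq> 0} \<le> s \<longrightarrow>
        (1 - d) * (norm x)\<^sup>2 \<le> (norm (A *v x))\<^sup>2)}"

definition rows_general_position :: "real^'r^'n \<Rightarrow> bool" where
  "rows_general_position X \<longleftrightarrow>
     (\<forall>S. S \<subseteq> row_supp X \<and> card S = CARD('r) \<longrightarrow>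
        inj_on (\<lambda>i. X $ i) S \<and> independent ((\<lambda>i. X $ i) ` S))"

text \<open>Column space R([A_I B]) of the horizontal concatenation [A_I B].\<close>
definition colspace_cat :: "real^'n^'m \<Rightarrow> 'n set \<Rightarrow> real^'r^'m \<Rightarrow> (real^'m) set" where
  "colspace_cat A I B = span ((\<lambda>j. column j A) ` I \<union> columns B)"

definition rank_cat :: "real^'n^'m \<Rightarrow> 'n set \<Rightarrow> real^'r^'m \<Rightarrow> nat" where
  "rank_cat A I B = dim (colspace_cat A I B)"

definition proj_onto :: "('a::real_inner) set \<Rightarrow> 'a \<Rightarrow> 'a" where
  "proj_onto S x = (THE y. y \<in> S \<and> (\<forall>z\<in>S. inner (x - y) z = 0))"

definition proj_perp :: "('a::real_inner) set \<Rightarrow> 'a \<Rightarrow> 'a" where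
  "proj_perp S x = x - proj_onto S x"

end

theory Submission
  imports Defs
begin

lemma proj_char:
  fixes a :: "'a::euclidean_space"
  shows "a \<in> span G \<longleftrightarrow> inner a (proj_perp (span G) a) = 0"
proof -
  obtain y z where y: "y \<in> span G" and z: "\<And>w. w \<in> span G \<Longrightarrow> orthogonal z w"
    and a: "a = y + z" using orthogonal_subspace_decomp_exists by blast
  have P: "proj_onto (span G) a = y"
    unfolding proj_onto_def
  proof (rule the_equality)
    show "y \<in> span G \<and> (\<forall>w\<in>span G. inner (a - y) w = 0)" using y z a by (simp add: orthogonal_def)
    fix y' assume h: "y' \<in> span G \<and> (\<forall>w\<in>span G. inner (a - y') w = 0)"
    have d: "y - y' \<in> span G" using h y span_diff by blast
    have 1: "inner (a - y') (y - y') = 0" using h d by blast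
    have 2: "inner (a - y) (y - y') = 0" using z d a by (simp add: orthogonal_def)
    have "y - y' = (a - y') - (a - y)" by simp
    hence "inner (y - y') (y - y') = 0" using 1 2 by (metis diff_zero inner_diff_left)
    thus "y' = y" by simp
  qed
  have pz: "proj_perp (span G) a = z" using P a unfolding proj_perp_def by simp
  have "inner z y = 0" using z y by (simp add: orthogonal_def)
  hence iz: "inner a z = inner z z" using a by (simp add: inner_add_left inner_commute[of z y])
  show ?thesis
  proof
    assume "a \<in> span G"
    hence "z \<in> span G" using a y by (metis add_diff_cancel_left' span_diff)
    hence "z = 0" using z by (metis orthogonal_self)
    thus "inner a (proj_perp (span G) a) = 0" using pz by simp
  next
    assume "inner a (proj_perp (span G) a) = 0"
    hence "z = 0" using pz iz by simp
    thus "a \<in> span G" using a y by simp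
  qed
qed

lemma rank_eq_iff:
  "rank_cat A I B = rank_cat A (I \<union> {j}) B \<longleftrightarrow> column j A \<in> colspace_cat A I B"
proof -
  have "(\<lambda>j. column j A) ` (I \<union> {j}) \<union> columns B = insert (column j A) ((\<lambda>j. column j A) ` I \<union> columns B)"
    by auto
  thus ?thesis unfolding rank_cat_def colspace_cat_def
    by (simp add: dim_span dim_insert)
qed

lemma Av_in_span:
  fixes A :: "real^'n^'m"
  assumes "\<And>i. x $ i \<noteq> 0 \<Longrightarrow> i \<in> I"
  shows "A *v x \<in> span ((\<lambda>j. column j A) ` I)"
  unfolding matrix_mult_sum
proof (rule span_sum)
  fix i show "x $ i *s column i A \<in> span ((\<lambda>j. column j A) ` I)"
    using assms[of i] by (cases "x $ i = 0") (auto simp: span_zero span_base scalar_mult_eq_scaleR span_scale)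
qed

lemma Bv_in_span:
  fixes B :: "real^'r^'m"
  shows "B *v y \<in> span (columns B)"
  unfolding matrix_mult_sum
proof (rule span_sum)
  fix i have "column i B \<in> columns B" by (auto simp: columns_def)
  thus "y $ i *s column i B \<in> span (columns B)" by (simp add: scalar_mult_eq_scaleR span_scale span_base)
qed

lemma ric_inj:
  fixes A :: "real^'n^'m"
  assumes "lower_ric s A < 1" "x \<noteq> 0" "card {i. x$i \<noteq> 0} \<le> s"
  shows "A *v x \<noteq> 0"
proof
  let ?D = "{d. d \<ge> 0 \<and> (\<forall>x::real^'n. card {i. x $ i \<noteq> 0} \<le> s \<longrightarrow>
        (1 - d) * (norm x)\<^sup>2 \<le> (norm (A *v x))\<^sup>2)}"
  have "1 \<in> ?D" by simp
  then obtain d where d: "d \<in> ?D" "d < 1"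
    using cInf_lessD[of ?D 1] assms(1) unfolding lower_ric_def by blast
  assume "A *v x = 0"
  then have "(1-d) * (norm x)\<^sup>2 \<le> 0" using d assms(3) by auto
  moreover have "(1-d)*(norm x)\<^sup>2 > 0" using d assms(2) by simp
  ultimately show False by simp
qed

lemma not_supp:
  fixes A :: "real^'n^'m" and X :: "real^'r^'n"
  assumes j: "j \<notin> I" "j \<notin> row_supp X"
    and inspan: "column j A \<in> colspace_cat A I (A ** X)"
    and ric: "lower_ric s A < 1"
    and cardb: "card (I - row_supp X) + card (row_supp X) + 1 \<le> s"
  shows False
proof -
  let ?S = "row_supp X"
  let ?U = "I \<union> ?S"
  define W where "W = {A *v x | x. \<forall>i. i \<notin> ?U \<longrightarrow> x$i = 0}"
  have sub: "subspace W" unfolding subspace_def W_def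
  proof (intro conjI ballI allI)
    show "0 \<in> {A *v x |x. \<forall>i. i \<notin> ?U \<longrightarrow> x $ i = 0}"
      by (rule CollectI, rule exI[of _ 0]) simp
  next
    fix a b assume "a \<in> {A *v x |x. \<forall>i. i \<notin> ?U \<longrightarrow> x $ i = 0}" "b \<in> {A *v x |x. \<forall>i. i \<notin> ?U \<longrightarrow> x $ i = 0}"
    then obtain x y where "a = A *v x" "\<forall>i. i \<notin> ?U \<longrightarrow> x $ i = 0" "b = A *v y" "\<forall>i. i \<notin> ?U \<longrightarrow> y $ i = 0" by blast
    thus "a + b \<in> {A *v x |x. \<forall>i. i \<notin> ?U \<longrightarrow> x $ i = 0}"
      by (intro CollectI exI[of _ "x + y"]) (simp add: matrix_vector_right_distrib)
  next
    fix c :: real and a assume "a \<in> {A *v x |x. \<forall>i. i \<notin> ?U \<longrightarrow> x $ i = 0}"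
    then obtain x where "a = A *v x" "\<forall>i. i \<notin> ?U \<longrightarrow> x $ i = 0" by blast
    thus "c *\<^sub>R a \<in> {A *v x |x. \<forall>i. i \<notin> ?U \<longrightarrow> x $ i = 0}"
      by (intro CollectI exI[of _ "c *\<^sub>R x"]) (simp add: matrix_vector_mult_scaleR)
  qed
  have gens: "(\<lambda>j. column j A) ` I \<union> columns (A ** X) \<subseteq> W"
  proof
    fix v assume "v \<in> (\<lambda>j. column j A) ` I \<union> columns (A ** X)"
    then consider i where "i \<in> I" "v = column i A" | i where "v = column i (A ** X)"
      unfolding columns_def by blast
    thus "v \<in> W"
    proof cases
      case 1
      then show ?thesis unfolding W_def
      proof (intro CollectI exI[of _ "axis i 1"] conjI allI impI)
        show "v = A *v axis i 1" using 1 by (simp add: matrix_vector_mult_basis)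
      qed (auto simp: axis_def)
    next
      case 2
      have "v = A *v column i X"
        using 2 by (metis matrix_vector_mul_assoc matrix_vector_mult_basis)
      moreover have "\<forall>p. p \<notin> ?U \<longrightarrow> column i X $ p = 0"
        by (auto simp: column_def row_supp_def)
      ultimately show ?thesis unfolding W_def by blast
    qed
  qed
  have "span ((\<lambda>j. column j A) ` I \<union> columns (A ** X)) \<subseteq> W"
    using span_minimal[OF gens sub] .
  with inspan obtain x where x: "column j A = A *v x" "\<forall>i. i \<notin> ?U \<longrightarrow> x$i = 0"
    unfolding colspace_cat_def W_def by blast
  define y where "y = axis j 1 - x"
  have xj: "x$j = 0" using x(2) j by blast
  have y0: "y \<noteq> 0" using xj unfolding y_def by (metis axis_nth vector_minus_component diff_zero one_neq_zero zero_index)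
  have Ay: "A *v y = 0" unfolding y_def
    by (simp add: matrix_vector_mult_diff_distrib matrix_vector_mult_basis x(1))
  have suppy: "{i. y$i \<noteq> 0} \<subseteq> insert j ((I - ?S) \<union> ?S)"
    using x(2) by (auto simp: y_def axis_def)
  have "card {i. y$i \<noteq> 0} \<le> card (insert j ((I - ?S) \<union> ?S))"
    by (rule card_mono[OF _ suppy]) simp
  also have "\<dots> \<le> card ((I - ?S) \<union> ?S) + 1" by (simp add: card_insert_le_m1 card_insert_if)
  also have "\<dots> = card (I - ?S) + card ?S + 1" by (subst card_Un_disjoint) auto
  finally have "card {i. y$i \<noteq> 0} \<le> s" using cardb by linarith
  from ric_inj[OF ric y0 this] Ay show False by simp
qed

lemma mv_inner: "((X::real^'r^'n) *v y) $ i = inner (X $ i) y"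
  by (simp add: matrix_vector_mult_def inner_vec_def)

lemma in_supp:
  fixes A :: "real^'n^'m" and X :: "real^'r^'n"
  assumes j: "j \<notin> I" "j \<in> row_supp X"
    and gp: "rows_general_position X"
    and c1: "card (row_supp X - I) \<le> CARD('r)" and c2: "CARD('r) \<le> card (row_supp X)"
  shows "column j A \<in> colspace_cat A I (A ** X)"
proof -
  let ?S = "row_supp X"
  let ?T = "?S - I"
  let ?r = "\<lambda>i. X $ i"
  obtain T' where T': "?T \<subseteq> T'" "T' \<subseteq> ?S" "card T' = CARD('r)"
    using exists_subset_between[OF c1 c2] by auto
  have "inj_on ?r T'" "independent (?r ` T')" using gp T' unfolding rows_general_position_def by auto
  hence inj: "inj_on ?r ?T" and ind: "independent (?r ` ?T)"
    using T'(1) by (auto intro: inj_on_subset dest: independent_mono[of _ "?r ` ?T"])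
  have jT: "j \<in> ?T" using j by simp
  have img: "?r ` ?T - {?r j} = ?r ` (?T - {j})" using inj jT by (auto simp: inj_on_def)
  have nsp: "?r j \<notin> span (?r ` (?T - {j}))"
    using ind jT img dependent_def by (metis imageI)
  obtain p z where p: "p \<in> span (?r ` (?T - {j}))"
    and z: "\<And>w. w \<in> span (?r ` (?T - {j})) \<Longrightarrow> orthogonal z w"
    and dec: "?r j = p + z" using orthogonal_subspace_decomp_exists by blast
  have z0: "z \<noteq> 0" using nsp p dec by auto
  have "inner z p = 0" using z p by (simp add: orthogonal_def)
  hence rjz: "inner (?r j) z = inner z z" using dec by (simp add: inner_add_left inner_commute[of p z])
  define y where "y = (1 / inner z z) *\<^sub>R z"
  define x where "x = X *v y"
  have xj: "x $ j = 1" using rjz z0 by (simp add: x_def y_def mv_inner)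
  define x' where "x' = x - axis j 1"
  have x'I: "x' $ i \<noteq> 0 \<Longrightarrow> i \<in> I" for i
  proof (rule ccontr)
    assume nz: "x' $ i \<noteq> 0" and iI: "i \<notin> I"
    show False
    proof (cases "i \<in> ?S")
      case False
      hence "X $ i = 0" by (simp add: row_supp_def)
      moreover have "i \<noteq> j" using False j by auto
      ultimately show False using nz by (simp add: x'_def x_def mv_inner axis_def)
    next
      case True
      show False
      proof (cases "i = j")
        case True thus False using nz xj by (simp add: x'_def)
      next
        case False
        hence "?r i \<in> span (?r ` (?T - {j}))" using \<open>i \<in> ?S\<close> iI by (auto intro: span_base)
        hence "inner z (?r i) = 0" using z by (simp add: orthogonal_def)
        hence "x $ i = 0" by (simp add: x_def y_def mv_inner inner_commute)
        thus False using nz False by (simp add: x'_def axis_def)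
      qed
    qed
  qed
  have eq: "column j A = (A ** X) *v y - A *v x'"
    by (simp add: x'_def x_def matrix_vector_mul_assoc[symmetric] matrix_vector_mult_diff_distrib matrix_vector_mult_basis)
  have 1: "(A ** X) *v y \<in> colspace_cat A I (A ** X)"
    unfolding colspace_cat_def using Bv_in_span span_mono[of "columns (A ** X)"] by blast
  have 2: "A *v x' \<in> colspace_cat A I (A ** X)"
    unfolding colspace_cat_def using Av_in_span[of x' I A, OF x'I] span_mono[of "(\<lambda>j. column j A) ` I"] by blast
  show ?thesis using eq 1 2 span_diff unfolding colspace_cat_def by metis
qed

theorem theorem2:
  fixes A :: "real^'n^'m" and X :: "real^'r^'n" and B :: "real^'r^'m"
    and k l :: nat and I :: "'n set" and j :: 'n
  assumes dims: "CARD('r) \<le> CARD('m)" "CARD('m) < CARD('n)" "CARD('r) \<le> k"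
    and suppX: "card (row_supp X) = k"
    and BAX: "B = A ** X"
    and Bfull: "rank B = CARD('r)"
    and l: "1 \<le> l" "l \<le> CARD('r)"
    and ric: "0 \<le> lower_ric (2 * k - CARD('r) + l) A" "lower_ric (2 * k - CARD('r) + l) A < 1"
    and gp: "rows_general_position X"
    and I1: "card I \<le> min (2 * (k - CARD('r)) + l - 1) (k - 1)"
    and I2: "card (I - row_supp X) \<le> k - CARD('r) + l - 1"
    and I3: "card (I \<inter> row_supp X) \<ge> k - CARD('r)"
    and j: "j \<notin> I"
  shows "(j \<in> row_supp X \<longleftrightarrow> rank_cat A I B = rank_cat A (I \<union> {j}) B)
       \<and> (rank_cat A I B = rank_cat A (I \<union> {j}) B \<longleftrightarrow>
            inner (column j A) (proj_perp (colspace_cat A I B) (column j A)) = 0)"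
proof -
  let ?S = "row_supp X"
  have fS: "finite ?S" by simp
  have c1: "card (?S - I) \<le> CARD('r)"
  proof -
    have "card (?S - I) = card ?S - card (?S \<inter> I)" by (rule card_Diff_subset_Int) simp
    also have "?S \<inter> I = I \<inter> ?S" by blast
    finally show ?thesis using suppX I3 by linarith
  qed
  have cb: "card (I - ?S) + card ?S + 1 \<le> 2 * k - CARD('r) + l"
    using I2 suppX l dims by linarith
  have ab: "j \<in> ?S \<longleftrightarrow> rank_cat A I B = rank_cat A (I \<union> {j}) B"
    unfolding rank_eq_iff BAX
  proof
    assume "j \<in> ?S" thus "column j A \<in> colspace_cat A I (A ** X)"
      using in_supp[OF j _ gp c1] suppX dims by simp
  next
    assume "column j A \<in> colspace_cat A I (A ** X)"
    thus "j \<in> ?S" using not_supp[OF j _ _ ric(2) cb] by blast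
  qed
  have bc: "rank_cat A I B = rank_cat A (I \<union> {j}) B \<longleftrightarrow>
            inner (column j A) (proj_perp (colspace_cat A I B) (column j A)) = 0"
    unfolding rank_eq_iff colspace_cat_def by (rule proj_char)
  show ?thesis using ab bc by blast
qed

end
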